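(* Let $K(\mathbf x)$ and $M(\mathbf x)$ be real symmetric positive definite $n\times n$ matrices depending on a parameter $\mathbf x\in\mathbb R^\ell$ in a $\mathcal C^2$ way. Fix $\mathbf x^{(0)}\in\mathbb R^\ell$ and let $U_m(\mathbf x^{(0)})\in\mathbb R^{n\times m}$ be the $M(\mathbf x^{(0)})$-orthogonal basis produced by the Lanczos process at $\mathbf x^{(0)}$, so that $U_m(\mathbf x^{(0)})^T M(\mathbf x^{(0)}) U_m(\mathbf x^{(0)}) = I_m$. Let $F(\mathbf x) = U_m(\mathbf x)^T M(\mathbf x) K(\mathbf x)^{-1} M(\mathbf x) U_m(\mathbf x)$ be the Lanczos projection at $\mathbf x$, so in particular $F(\mathbf x^{(0)}) = U_m(\mathbf x^{(0)})^T M(\mathbf x^{(0)}) K(\mathbf x^{(0)})^{-1} M(\mathbf x^{(0)}) U_m(\mathbf x^{(0)})$. Then there exist a neighborhood $\mathcal N$ of $\mathbf x^{(0)}$ and a matrix-valued function $U_{m,0}:\mathcal N\to\mathbb R^{n\times m}$ such that: 1. for every $\mathbf x\in\mathcal N$, the columns of $U_{m,0}(\mathbf x)$ form an $M(\mathbf x)$-orthogonal basis of the column span of $U_m(\mathbf x^{(0)})$, i.e. $U_{m,0}(\mathbf x)^T M(\mathbf x) U_{m,0}(\mathbf x) = I_m$ and $\operatorname{span} U_{m,0}(\mathbf x) = \operatorname{span} U_m(\mathbf x^{(0)})$; 2. the function $F_0(\mathbf x) := U_{m,0}(\mathbf x)^T M(\mathbf x) K(\mathbf x)^{-1} M(\mathbf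 x) U_{m,0}(\mathbf x)$ is of class $\mathcal C^2(\mathcal N)$ and $F_0(\mathbf x^{(0)}) = F(\mathbf x^{(0)})$.
   Context: The setting is a parametric finite element model: $K(\mathbf x)$ (stiffness) and $M(\mathbf x)$ (mass) are the constraint-projected matrices, and the smallest eigenvalues of the pencil $K(\mathbf x)-\lambda M(\mathbf x)$ are approximated by running an inverse Lanczos process (with a fixed starting vector) on $M(\mathbf x)^{1/2}K(\mathbf x)^{-1}M(\mathbf x)^{1/2}$, implemented with the $M(\mathbf x)$-inner product; $U_m(\mathbf x)$ denotes the resulting $n\times m$ $M(\mathbf x)$-orthogonal Krylov basis. A matrix $U$ is $M$-orthogonal if $U^TMU=I$. *)

theory Defs
  imports "HOL-Analysis.Analysis"
begin

definition sym_posdef :: "real^'n^'n \<Rightarrow> bool" where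
  "sym_posdef A \<longleftrightarrow> transpose A = A \<and> (\<forall>v::real^'n. v \<noteq> 0 \<longrightarrow> v \<bullet> (A *v v) > 0)"

text \<open>Class C^2 on a set S (intended for open S): twice Frechet differentiable at every
  point of S with continuous second derivative on S.\<close>
definition C2_on :: "'a::real_normed_vector set \<Rightarrow> ('a \<Rightarrow> 'b::real_normed_vector) \<Rightarrow> bool" where
  "C2_on S f \<longleftrightarrow> (\<exists>(f' :: 'a \<Rightarrow> ('a \<Rightarrow>\<^sub>L 'b)) (f'' :: 'a \<Rightarrow> ('a \<Rightarrow>\<^sub>L ('a \<Rightarrow>\<^sub>L 'b))).
     (\<forall>x\<in>S. (f has_derivative blinfun_apply (f' x)) (at x) \<and>
             (f' has_derivative blinfun_apply (f'' x)) (at x)) \<and>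
     continuous_on S f'')"

end

theory Submission
  imports Defs
begin

definition C1o :: "'a::real_normed_vector set \<Rightarrow> ('a \<Rightarrow> 'b::real_normed_vector) \<Rightarrow> bool" where
 "C1o S f \<longleftrightarrow> (\<exists>f'::'a \<Rightarrow> ('a \<Rightarrow>\<^sub>L 'b). (\<forall>x\<in>S. (f has_derivative blinfun_apply (f' x)) (at x)) \<and> continuous_on S f')"

lemma C2_alt: "C2_on S f \<longleftrightarrow> (\<exists>f'. (\<forall>x\<in>S. (f has_derivative blinfun_apply (f' x)) (at x)) \<and> C1o S f')"
  unfolding C2_on_def C1o_def by blast

lemma C1o_cont: "C1o S f \<Longrightarrow> continuous_on S f"
  unfolding C1o_def
  by (meson continuous_at_imp_continuous_on has_derivative_continuous)

lemma C2_C1: "C2_on S f \<Longrightarrow> C1o S f"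
proof -
  assume "C2_on S f"
  then obtain f' where d: "\<forall>x\<in>S. (f has_derivative blinfun_apply (f' x)) (at x)" and c: "C1o S f'"
    unfolding C2_alt by blast
  show "C1o S f" unfolding C1o_def using d C1o_cont[OF c] by blast
qed

lemma hd_lin: assumes L: "bounded_linear L" and d: "(f has_derivative blinfun_apply F) (at x)"
  shows "((\<lambda>x. L (f x)) has_derivative blinfun_apply (Blinfun L o\<^sub>L F)) (at x)"
proof -
  have e: "blinfun_apply (Blinfun L o\<^sub>L F) = (\<lambda>v. L (F v))"
    by (rule ext) (simp add: bounded_linear_Blinfun_apply[OF L])
  show ?thesis unfolding e by (rule bounded_linear.has_derivative[OF L d])
qed

lemma hd_bil: assumes B: "bounded_bilinear B" and d: "(f has_derivative blinfun_apply F) (at x)"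
  and d2: "(g has_derivative blinfun_apply G) (at x)"
  shows "((\<lambda>x. B (f x) (g x)) has_derivative blinfun_apply
     ((bounded_bilinear.prod_left B (g x) o\<^sub>L F) + (bounded_bilinear.prod_right B (f x) o\<^sub>L G))) (at x)"
proof -
  have e: "blinfun_apply ((bounded_bilinear.prod_left B (g x) o\<^sub>L F) + (bounded_bilinear.prod_right B (f x) o\<^sub>L G))
      = (\<lambda>h. B (f x) (G h) + B (F h) (g x))"
  proof (rule ext)
    fix h
    have 1: "blinfun_apply (bounded_bilinear.prod_left B (g x) o\<^sub>L F) h = B (F h) (g x)"
      by (simp add: bounded_bilinear.prod_left.rep_eq[OF B])
    have 2: "blinfun_apply (bounded_bilinear.prod_right B (f x) o\<^sub>L G) h = B (f x) (G h)"
      by (simp add: bounded_bilinear.prod_right.rep_eq[OF B])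
    show "blinfun_apply ((bounded_bilinear.prod_left B (g x) o\<^sub>L F) + (bounded_bilinear.prod_right B (f x) o\<^sub>L G)) h
      = B (f x) (G h) + B (F h) (g x)"
      unfolding plus_blinfun.rep_eq 1 2 by (rule add.commute)
  qed
  show ?thesis unfolding e by (rule bounded_bilinear.FDERIV[OF B d d2])
qed

lemma hd_real: assumes d: "(\<phi> has_real_derivative D) (at (f x))" and df: "(f has_derivative blinfun_apply F) (at x)"
  shows "((\<lambda>x. \<phi> (f x :: real)) has_derivative blinfun_apply (D *\<^sub>R F)) (at x)"
proof -
  have "(\<phi> has_derivative (\<lambda>h. D * h)) (at (f x))"
    using d by (auto simp: has_field_derivative_def)
  from has_derivative_compose[OF df this]
  show ?thesis by (simp add: scaleR_blinfun.rep_eq)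
qed

lemma C1o_const: "C1o S (\<lambda>x. c)"
  unfolding C1o_def by (rule exI[of _ "\<lambda>x. 0"]) (auto simp: zero_blinfun.rep_eq)

lemma C1o_add: assumes f: "C1o S f" and g: "C1o S g" shows "C1o S (\<lambda>x. f x + g x)"
proof -
  from f obtain f' where d: "\<forall>x\<in>S. (f has_derivative blinfun_apply (f' x)) (at x)" and c: "continuous_on S f'"
    unfolding C1o_def by blast
  from g obtain g' where d2: "\<forall>x\<in>S. (g has_derivative blinfun_apply (g' x)) (at x)" and c2: "continuous_on S g'"
    unfolding C1o_def by blast
  show ?thesis unfolding C1o_def
  proof (intro exI[of _ "\<lambda>x. f' x + g' x"] conjI ballI)
    fix x assume "x \<in> S"
    then show "((\<lambda>x. f x + g x) has_derivative blinfun_apply (f' x + g' x)) (at x)"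
      using has_derivative_add[OF d[rule_format, OF \<open>x \<in> S\<close>] d2[rule_format, OF \<open>x \<in> S\<close>]]
      by (simp add: plus_blinfun.rep_eq)
  next
    show "continuous_on S (\<lambda>x. f' x + g' x)" by (intro continuous_on_add c c2)
  qed
qed

lemma C1o_bilinear: assumes B: "bounded_bilinear B" and f: "C1o S f" and g: "C1o S g"
  shows "C1o S (\<lambda>x. B (f x) (g x))"
proof -
  from f obtain f' where d: "\<forall>x\<in>S. (f has_derivative blinfun_apply (f' x)) (at x)" and c: "continuous_on S f'"
    unfolding C1o_def by blast
  from g obtain g' where d2: "\<forall>x\<in>S. (g has_derivative blinfun_apply (g' x)) (at x)" and c2: "continuous_on S g'"
    unfolding C1o_def by blast
  have cf: "continuous_on S f" and cg: "continuous_on S g" using f g C1o_cont by auto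
  show ?thesis unfolding C1o_def
  proof (intro exI[of _ "\<lambda>x. (bounded_bilinear.prod_left B (g x) o\<^sub>L f' x) + (bounded_bilinear.prod_right B (f x) o\<^sub>L g' x)"] conjI ballI)
    fix x assume "x \<in> S"
    show "((\<lambda>x. B (f x) (g x)) has_derivative blinfun_apply ((bounded_bilinear.prod_left B (g x) o\<^sub>L f' x) + (bounded_bilinear.prod_right B (f x) o\<^sub>L g' x))) (at x)"
      by (rule hd_bil[OF B d[rule_format, OF \<open>x \<in> S\<close>] d2[rule_format, OF \<open>x \<in> S\<close>]])
  next
    show "continuous_on S (\<lambda>x. (bounded_bilinear.prod_left B (g x) o\<^sub>L f' x) + (bounded_bilinear.prod_right B (f x) o\<^sub>L g' x))"
    proof (rule continuous_on_add)
      have "continuous_on S (\<lambda>x. bounded_bilinear.prod_left B (g x))"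
        using bounded_linear.continuous_on[OF bounded_bilinear.bounded_linear_prod_left[OF B] cg] .
      then show "continuous_on S (\<lambda>x. bounded_bilinear.prod_left B (g x) o\<^sub>L f' x)"
        by (rule bounded_bilinear.continuous_on[OF bounded_bilinear_blinfun_compose _ c])
      have "continuous_on S (\<lambda>x. bounded_bilinear.prod_right B (f x))"
        using bounded_linear.continuous_on[OF bounded_bilinear.bounded_linear_prod_right[OF B] cf] .
      then show "continuous_on S (\<lambda>x. bounded_bilinear.prod_right B (f x) o\<^sub>L g' x)"
        by (rule bounded_bilinear.continuous_on[OF bounded_bilinear_blinfun_compose _ c2])
    qed
  qed
qed

lemma C1o_linear: assumes L: "bounded_linear L" and f: "C1o S f" shows "C1o S (\<lambda>x. L (f x))"
proof -
  from f obtain f' where d: "\<forall>x\<in>S. (f has_derivative blinfun_apply (f' x)) (at x)" and c: "continuous_on S f'"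
    unfolding C1o_def by blast
  show ?thesis unfolding C1o_def
  proof (intro exI[of _ "\<lambda>x. Blinfun L o\<^sub>L f' x"] conjI ballI)
    fix x assume "x \<in> S"
    show "((\<lambda>x. L (f x)) has_derivative blinfun_apply (Blinfun L o\<^sub>L f' x)) (at x)"
      by (rule hd_lin[OF L d[rule_format, OF \<open>x \<in> S\<close>]])
  next
    show "continuous_on S (\<lambda>x. Blinfun L o\<^sub>L f' x)"
      by (rule bounded_bilinear.continuous_on[OF bounded_bilinear_blinfun_compose continuous_on_const[of S "Blinfun L"] c])
  qed
qed

lemma C1o_real_comp:
  assumes d: "\<And>t. t \<in> T \<Longrightarrow> (\<phi> has_real_derivative \<phi>' t) (at t)"
    and c: "continuous_on T \<phi>'" and f: "C1o S f" and fT: "f ` S \<subseteq> T"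
  shows "C1o S (\<lambda>x. \<phi> (f x :: real))"
proof -
  from f obtain f' where df: "\<forall>x\<in>S. (f has_derivative blinfun_apply (f' x)) (at x)" and cf': "continuous_on S f'"
    unfolding C1o_def by blast
  have cf: "continuous_on S f" using f C1o_cont by auto
  show ?thesis unfolding C1o_def
  proof (intro exI[of _ "\<lambda>x. \<phi>' (f x) *\<^sub>R f' x"] conjI ballI)
    fix x assume x: "x \<in> S"
    show "((\<lambda>x. \<phi> (f x)) has_derivative blinfun_apply (\<phi>' (f x) *\<^sub>R f' x)) (at x)"
      by (rule hd_real[OF d df[rule_format, OF x]]) (use x fT in auto)
  next
    have "continuous_on S (\<lambda>x. \<phi>' (f x))"
      by (rule continuous_on_compose2[OF c cf fT])
    then show "continuous_on S (\<lambda>x. \<phi>' (f x) *\<^sub>R f' x)"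
      by (intro continuous_on_scaleR cf')
  qed
qed

lemma C2_const: "C2_on S (\<lambda>x. c)"
  unfolding C2_alt by (rule exI[of _ "\<lambda>x. 0"]) (auto simp: zero_blinfun.rep_eq intro: C1o_const)

lemma C2_add: assumes f: "C2_on S f" and g: "C2_on S g" shows "C2_on S (\<lambda>x. f x + g x)"
proof -
  from f obtain f' where d: "\<forall>x\<in>S. (f has_derivative blinfun_apply (f' x)) (at x)" and c: "C1o S f'"
    unfolding C2_alt by blast
  from g obtain g' where d2: "\<forall>x\<in>S. (g has_derivative blinfun_apply (g' x)) (at x)" and c2: "C1o S g'"
    unfolding C2_alt by blast
  show ?thesis unfolding C2_alt
  proof (intro exI[of _ "\<lambda>x. f' x + g' x"] conjI ballI)
    fix x assume "x \<in> S"
    then show "((\<lambda>x. f x + g x) has_derivative blinfun_apply (f' x + g' x)) (at x)"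
      using has_derivative_add[OF d[rule_format, OF \<open>x \<in> S\<close>] d2[rule_format, OF \<open>x \<in> S\<close>]]
      by (simp add: plus_blinfun.rep_eq)
  next
    show "C1o S (\<lambda>x. f' x + g' x)" by (rule C1o_add[OF c c2])
  qed
qed

lemma C2_bilinear: assumes B: "bounded_bilinear B" and f: "C2_on S f" and g: "C2_on S g"
  shows "C2_on S (\<lambda>x. B (f x) (g x))"
proof -
  from f obtain f' where d: "\<forall>x\<in>S. (f has_derivative blinfun_apply (f' x)) (at x)" and c: "C1o S f'"
    unfolding C2_alt by blast
  from g obtain g' where d2: "\<forall>x\<in>S. (g has_derivative blinfun_apply (g' x)) (at x)" and c2: "C1o S g'"
    unfolding C2_alt by blast
  have cf: "C1o S f" and cg: "C1o S g" using f g C2_C1 by auto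
  show ?thesis unfolding C2_alt
  proof (intro exI[of _ "\<lambda>x. (bounded_bilinear.prod_left B (g x) o\<^sub>L f' x) + (bounded_bilinear.prod_right B (f x) o\<^sub>L g' x)"] conjI ballI)
    fix x assume "x \<in> S"
    show "((\<lambda>x. B (f x) (g x)) has_derivative blinfun_apply ((bounded_bilinear.prod_left B (g x) o\<^sub>L f' x) + (bounded_bilinear.prod_right B (f x) o\<^sub>L g' x))) (at x)"
      by (rule hd_bil[OF B d[rule_format, OF \<open>x \<in> S\<close>] d2[rule_format, OF \<open>x \<in> S\<close>]])
  next
    show "C1o S (\<lambda>x. (bounded_bilinear.prod_left B (g x) o\<^sub>L f' x) + (bounded_bilinear.prod_right B (f x) o\<^sub>L g' x))"
    proof (rule C1o_add)
      have "C1o S (\<lambda>x. bounded_bilinear.prod_left B (g x))"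
        by (rule C1o_linear[OF bounded_bilinear.bounded_linear_prod_left[OF B] cg])
      then show "C1o S (\<lambda>x. bounded_bilinear.prod_left B (g x) o\<^sub>L f' x)"
        by (rule C1o_bilinear[OF bounded_bilinear_blinfun_compose _ c])
      have "C1o S (\<lambda>x. bounded_bilinear.prod_right B (f x))"
        by (rule C1o_linear[OF bounded_bilinear.bounded_linear_prod_right[OF B] cf])
      then show "C1o S (\<lambda>x. bounded_bilinear.prod_right B (f x) o\<^sub>L g' x)"
        by (rule C1o_bilinear[OF bounded_bilinear_blinfun_compose _ c2])
    qed
  qed
qed

lemma C2_linear: assumes L: "bounded_linear L" and f: "C2_on S f" shows "C2_on S (\<lambda>x. L (f x))"
proof -
  from f obtain f' where d: "\<forall>x\<in>S. (f has_derivative blinfun_apply (f' x)) (at x)" and c: "C1o S f'"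
    unfolding C2_alt by blast
  show ?thesis unfolding C2_alt
  proof (intro exI[of _ "\<lambda>x. Blinfun L o\<^sub>L f' x"] conjI ballI)
    fix x assume "x \<in> S"
    show "((\<lambda>x. L (f x)) has_derivative blinfun_apply (Blinfun L o\<^sub>L f' x)) (at x)"
      by (rule hd_lin[OF L d[rule_format, OF \<open>x \<in> S\<close>]])
  next
    show "C1o S (\<lambda>x. Blinfun L o\<^sub>L f' x)"
      by (rule C1o_bilinear[OF bounded_bilinear_blinfun_compose C1o_const c])
  qed
qed

lemma C2_real_comp:
  assumes d: "\<And>t. t \<in> T \<Longrightarrow> (\<phi> has_real_derivative \<phi>' t) (at t)"
    and d2: "\<And>t. t \<in> T \<Longrightarrow> (\<phi>' has_real_derivative \<phi>'' t) (at t)"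
    and c: "continuous_on T \<phi>''" and f: "C2_on S f" and fT: "f ` S \<subseteq> T"
  shows "C2_on S (\<lambda>x. \<phi> (f x :: real))"
proof -
  from f obtain f' where df: "\<forall>x\<in>S. (f has_derivative blinfun_apply (f' x)) (at x)" and cf': "C1o S f'"
    unfolding C2_alt by blast
  have cf: "C1o S f" using f C2_C1 by auto
  show ?thesis unfolding C2_alt
  proof (intro exI[of _ "\<lambda>x. \<phi>' (f x) *\<^sub>R f' x"] conjI ballI)
    fix x assume x: "x \<in> S"
    show "((\<lambda>x. \<phi> (f x)) has_derivative blinfun_apply (\<phi>' (f x) *\<^sub>R f' x)) (at x)"
      by (rule hd_real[OF d df[rule_format, OF x]]) (use x fT in auto)
  next
    have "C1o S (\<lambda>x. \<phi>' (f x))"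
      by (rule C1o_real_comp[OF d2 c cf fT])
    then show "C1o S (\<lambda>x. \<phi>' (f x) *\<^sub>R f' x)"
      by (rule C1o_bilinear[OF bounded_bilinear_scaleR _ cf'])
  qed
qed

lemma C2_sum: assumes "finite I" "\<And>i. i \<in> I \<Longrightarrow> C2_on S (f i)"
  shows "C2_on S (\<lambda>x. \<Sum>i\<in>I. f i x)"
  using assms
proof (induction I rule: finite_induct)
  case empty then show ?case by (simp add: C2_const)
next
  case (insert a I)
  then show ?case by (simp add: C2_add)
qed

lemma C2_prod: assumes "finite I" "\<And>i. i \<in> I \<Longrightarrow> C2_on S (f i :: _ \<Rightarrow> real)"
  shows "C2_on S (\<lambda>x. \<Prod>i\<in>I. f i x)"
  using assms
proof (induction I rule: finite_induct)
  case empty then show ?case by (simp add: C2_const)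
next
  case (insert a I)
  then show ?case by (simp add: C2_bilinear[OF bounded_bilinear_mult])
qed

lemma C2_mult: "C2_on S f \<Longrightarrow> C2_on S g \<Longrightarrow> C2_on S (\<lambda>x. f x * (g x :: real))"
  by (rule C2_bilinear[OF bounded_bilinear_mult])

lemma C2_scaleR: "C2_on S f \<Longrightarrow> C2_on S g \<Longrightarrow> C2_on S (\<lambda>x. f x *\<^sub>R g x)"
  by (rule C2_bilinear[OF bounded_bilinear_scaleR])

lemma C2_inverse: assumes f: "C2_on S f" and nz: "\<And>x. x \<in> S \<Longrightarrow> f x \<noteq> (0::real)"
  shows "C2_on S (\<lambda>x. inverse (f x))"
proof -
  have h1: "(inverse has_real_derivative (\<lambda>t. - inverse (t^2)) t) (at t)" if "t \<in> - {0}" for t :: real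
    using DERIV_inverse[of t UNIV] that by (simp add: power2_eq_square)
  have h2: "((\<lambda>t. - inverse (t^2)) has_real_derivative (\<lambda>t. 2 * inverse (t^3)) t) (at t)" if "t \<in> - {0}" for t :: real
    using that by (auto intro!: derivative_eq_intros simp: field_simps power2_eq_square power3_eq_cube)
  have c: "continuous_on (- {0}) (\<lambda>t::real. 2 * inverse (t ^ 3))"
    by (intro continuous_intros) auto
  show ?thesis by (rule C2_real_comp[OF h1 h2 c f]) (use nz in auto)
qed

lemma C2_sqrt: assumes f: "C2_on S f" and nz: "\<And>x. x \<in> S \<Longrightarrow> f x > (0::real)"
  shows "C2_on S (\<lambda>x. sqrt (f x))"
proof -
  have h1: "(sqrt has_real_derivative (\<lambda>t. inverse (sqrt t) / 2) t) (at t)" if "t \<in> {0<..}" for t :: real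
    using DERIV_real_sqrt[of t] that by simp
  have h2: "((\<lambda>t. inverse (sqrt t) / 2) has_real_derivative (\<lambda>t. - inverse (4 * sqrt t ^ 3)) t) (at t)" if "t \<in> {0<..}" for t :: real
    using that by (auto intro!: derivative_eq_intros simp: field_simps power2_eq_square power3_eq_cube)
  have c: "continuous_on {0<..} (\<lambda>t::real. - inverse (4 * sqrt t ^ 3))"
    by (intro continuous_intros) auto
  show ?thesis by (rule C2_real_comp[OF h1 h2 c f]) (use nz in auto)
qed

lemma C2_nth: "C2_on S f \<Longrightarrow> C2_on S (\<lambda>x. f x $ i)"
  by (rule C2_linear[OF bounded_linear_vec_nth])

lemma bl_axis: "bounded_linear (axis i :: 'b::euclidean_space \<Rightarrow> 'b^'n)"
proof -
  have "linear (axis i :: 'b \<Rightarrow> 'b^'n)"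
    by (rule linearI) (simp_all add: axis_def vec_eq_iff)
  then show ?thesis by (simp add: linear_conv_bounded_linear)
qed

lemma vec_axis_sum: "(\<chi> i. g i) = (\<Sum>i\<in>UNIV. axis i (g i) :: 'b::comm_monoid_add^'n)"
  by (simp add: vec_eq_iff axis_def)

lemma C2_vec: assumes "\<And>i. C2_on S (\<lambda>x. f x i)"
  shows "C2_on S (\<lambda>x. (\<chi> i. f x i) :: 'b::euclidean_space^'n)"
proof -
  have "C2_on S (\<lambda>x. \<Sum>i\<in>UNIV. axis i (f x i) :: 'b^'n)"
    by (rule C2_sum) (auto intro: C2_linear[OF bl_axis] assms)
  then show ?thesis by (simp add: vec_axis_sum)
qed

lemma C2_diff: "C2_on S f \<Longrightarrow> C2_on S g \<Longrightarrow> C2_on S (\<lambda>x. f x - g x)"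
proof -
  assume f: "C2_on S f" and g: "C2_on S g"
  have "C2_on S (\<lambda>x. - g x)" by (rule C2_linear[OF bounded_linear_minus[OF bounded_linear_ident] g])
  from C2_add[OF f this] show ?thesis by simp
qed

lemma C2_mmul: assumes A: "C2_on S A" and B: "C2_on S B"
  shows "C2_on S (\<lambda>x. (A x :: real^'k^'i) ** (B x :: real^'j^'k))"
  unfolding matrix_matrix_mult_def
  by (intro C2_vec C2_sum C2_mult C2_nth A B finite)

lemma C2_mvmul: assumes A: "C2_on S A" and v: "C2_on S v"
  shows "C2_on S (\<lambda>x. (A x :: real^'k^'i) *v (v x :: real^'k))"
  unfolding matrix_vector_mult_def
  by (intro C2_vec C2_sum C2_mult C2_nth A v finite)

lemma C2_inner: assumes v: "C2_on S v" and w: "C2_on S w"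
  shows "C2_on S (\<lambda>x. (v x :: real^'k) \<bullet> w x)"
  unfolding inner_vec_def inner_real_def
  by (intro C2_sum C2_mult C2_nth v w finite)

lemma C2_transpose: assumes A: "C2_on S A"
  shows "C2_on S (\<lambda>x. transpose (A x :: real^'k^'i))"
  unfolding transpose_def
  by (intro C2_vec C2_nth A)

lemma C2_det: assumes A: "C2_on S A"
  shows "C2_on S (\<lambda>x. det (A x :: real^'k^'k))"
  unfolding det_def
  by (intro C2_sum C2_mult C2_prod C2_nth A C2_const finite finite_permutations)

lemma matrix_inv_right: assumes "invertible A" shows "A ** matrix_inv A = mat 1"
proof -
  from assms have "\<exists>A'. A ** A' = mat 1 \<and> A' ** A = mat 1" unfolding invertible_def .
  then have "A ** matrix_inv A = mat 1 \<and> matrix_inv A ** A = mat 1"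
    unfolding matrix_inv_def by (rule someI_ex)
  then show ?thesis by simp
qed

lemma inv_entry: fixes A :: "real^'n^'n" assumes d: "det A \<noteq> 0"
  shows "matrix_inv A $ k $ j = det (\<chi> i j'. if j' = k then axis j 1 $ i else A$i$j') / det A"
proof -
  have inv: "invertible A" using d invertible_det_nz by blast
  define x where "x = (\<chi> k. matrix_inv A $ k $ j)"
  have "A *v x = axis j 1"
  proof -
    have "(A ** matrix_inv A) $ i $ j = mat 1 $ i $ j" for i
      using matrix_inv_right[OF inv] by simp
    then show ?thesis
      unfolding x_def by (simp add: vec_eq_iff matrix_vector_mult_def matrix_matrix_mult_def mat_def axis_def)
  qed
  then have "x = (\<chi> k. det(\<chi> i j'. if j'=k then (axis j 1 :: real^'n)$i else A$i$j') / det A)"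
    using cramer[OF d] by blast
  then have "x $ k = det(\<chi> i j'. if j'=k then (axis j 1 :: real^'n)$i else A$i$j') / det A" by simp
  then show ?thesis unfolding x_def by simp
qed

lemma pd_det: fixes A :: "real^'n^'n" assumes "sym_posdef A" shows "det A \<noteq> 0"
proof -
  have "inj ((*v) A)"
  proof (rule injI)
    fix x y assume "A *v x = A *v y"
    then have "A *v (x - y) = 0" by (simp add: matrix_vector_mult_diff_distrib)
    then show "x = y" using assms unfolding sym_posdef_def
      by (metis inner_zero_right less_irrefl right_minus_eq)
  qed
  then have "det (matrix ((*v) A)) \<noteq> 0"
    using det_nz_iff_inj[of "(*v) A"] by (simp add: matrix_vector_mul_linear)
  then show ?thesis by simp
qed

lemma C2_matrix_inv: assumes K: "C2_on S K" and pd: "\<And>x. det (K x :: real^'n^'n) \<noteq> 0"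
  shows "C2_on S (\<lambda>x. matrix_inv (K x))"
proof -
  have e: "(\<lambda>x. matrix_inv (K x)) = (\<lambda>x. \<chi> k j. det (\<chi> i j'. if j' = k then axis j 1 $ i else K x$i$j') * inverse (det (K x)))"
    by (rule ext) (simp add: vec_eq_iff inv_entry pd divide_inverse)
  have "C2_on S (\<lambda>x. \<chi> k j. det (\<chi> i j'. if j' = k then (axis j 1 :: real^'n) $ i else K x$i$j') * inverse (det (K x)))"
  proof (intro C2_vec C2_mult C2_det C2_inverse)
    fix k j i j'
    show "C2_on S (\<lambda>x. if j' = k then (axis j 1 :: real^'n) $ i else K x $ i $ j')"
      by (cases "j' = k") (simp_all add: C2_const C2_nth K)
  qed (use K pd in \<open>auto intro: C2_det\<close>)
  then show ?thesis unfolding e .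
qed

function gs :: "real^'n^'n \<Rightarrow> (nat \<Rightarrow> real^'n) \<Rightarrow> nat \<Rightarrow> real^'n" where
  "gs A u k = (let v = u k - (\<Sum>j<k. ((A *v gs A u j) \<bullet> u k) *\<^sub>R gs A u j)
               in (1 / sqrt ((A *v v) \<bullet> v)) *\<^sub>R v)"
  by pat_completeness auto
termination by (relation "Wellfounded.measure (\<lambda>(A,u,k). k)") auto

declare gs.simps[simp del]

definition gsv :: "real^'n^'n \<Rightarrow> (nat \<Rightarrow> real^'n) \<Rightarrow> nat \<Rightarrow> real^'n" where
  "gsv A u k = u k - (\<Sum>j<k. ((A *v gs A u j) \<bullet> u k) *\<^sub>R gs A u j)"

lemma gs_eq: "gs A u k = (1 / sqrt ((A *v gsv A u k) \<bullet> gsv A u k)) *\<^sub>R gsv A u k"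
  unfolding gsv_def by (subst gs.simps) (simp add: Let_def)

lemma sym_ip: assumes "transpose A = A" shows "(A *v v) \<bullet> w = (A *v w) \<bullet> (v::real^'n)"
proof -
  have "(A *v w) \<bullet> v = (w v* transpose A) \<bullet> v" by simp
  also have "\<dots> = w \<bullet> (transpose A *v v)" by (rule dot_lmul_matrix)
  also have "\<dots> = (A *v v) \<bullet> w" using assms by (simp add: inner_commute)
  finally show ?thesis by simp
qed

lemma span_Suc: "span (f ` {..<k}) \<subseteq> span (f ` {..<Suc k})"
  by (intro span_mono image_mono) auto

lemma GS_main:
  fixes A :: "real^'n^'n" and u :: "nat \<Rightarrow> real^'n"
  assumes symA: "transpose A = A" and pd: "\<And>v. v \<noteq> 0 \<Longrightarrow> v \<bullet> (A *v v) > 0"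
    and ind: "\<And>k. k < m \<Longrightarrow> u k \<notin> span (u ` {..<k})"
  shows "k \<le> m \<Longrightarrow> (\<forall>i<k. \<forall>j<k. (A *v gs A u i) \<bullet> gs A u j = (if i = j then 1 else 0))
     \<and> span (gs A u ` {..<k}) = span (u ` {..<k})"
proof (induction k)
  case 0 then show ?case by simp
next
  case (Suc k)
  then have km: "k < m" by simp
  from Suc.IH km have orth: "\<forall>i<k. \<forall>j<k. (A *v gs A u i) \<bullet> gs A u j = (if i = j then 1 else 0)"
    and sp: "span (gs A u ` {..<k}) = span (u ` {..<k})" by auto
  define G where "G = gs A u"
  define S where "S = (\<Sum>j<k. ((A *v G j) \<bullet> u k) *\<^sub>R G j)"
  define v where "v = gsv A u k"
  have v_eq: "v = u k - S" unfolding v_def gsv_def S_def G_def by simp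
  have Ssp: "S \<in> span (G ` {..<k})" unfolding S_def
    by (intro span_sum span_scale span_base) auto
  have vnz: "v \<noteq> 0"
  proof
    assume "v = 0"
    then have "u k = S" using v_eq by simp
    with Ssp sp have "u k \<in> span (u ` {..<k})" unfolding G_def by simp
    with ind[OF km] show False by simp
  qed
  define q where "q = (A *v v) \<bullet> v"
  have qpos: "q > 0" unfolding q_def using pd[OF vnz] by (simp add: inner_commute)
  have Gk: "G k = (1 / sqrt q) *\<^sub>R v" unfolding G_def q_def v_def by (rule gs_eq)
  have ov: "(A *v G i) \<bullet> v = 0" if i: "i < k" for i
  proof -
    have "(A *v G i) \<bullet> v = (A *v G i) \<bullet> u k - (\<Sum>j<k. ((A *v G j) \<bullet> u k) * ((A *v G i) \<bullet> G j))"
      unfolding v_eq S_def by (simp add: inner_diff_right inner_sum_right)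
    also have "(\<Sum>j<k. ((A *v G j) \<bullet> u k) * ((A *v G i) \<bullet> G j)) = (\<Sum>j<k. if j = i then (A *v G j) \<bullet> u k else 0)"
      by (rule sum.cong) (use orth i in \<open>auto simp: G_def\<close>)
    also have "\<dots> = (A *v G i) \<bullet> u k" using i by simp
    finally show ?thesis by simp
  qed
  have o1: "(A *v G i) \<bullet> G k = 0" if "i < k" for i
    unfolding Gk using ov[OF that] by simp
  have o2: "(A *v G k) \<bullet> G i = 0" if "i < k" for i
    using o1[OF that] sym_ip[OF symA, of "G k" "G i"] by simp
  have o3: "(A *v G k) \<bullet> G k = 1"
  proof -
    have "(A *v G k) \<bullet> G k = (1 / sqrt q) * (1 / sqrt q) * q"
      unfolding Gk q_def by (simp add: matrix_vector_mult_scaleR)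
    also have "\<dots> = 1" using qpos by (simp add: field_simps)
    finally show ?thesis .
  qed
  have A1: "\<forall>i<Suc k. \<forall>j<Suc k. (A *v G i) \<bullet> G j = (if i = j then 1 else 0)"
  proof (intro allI impI)
    fix i j assume "i < Suc k" "j < Suc k"
    then consider "i < k" "j < k" | "i < k" "j = k" | "i = k" "j < k" | "i = k" "j = k" by linarith
    then show "(A *v G i) \<bullet> G j = (if i = j then 1 else 0)"
      by cases (use orth o1 o2 o3 in \<open>auto simp: G_def\<close>)
  qed
  have B1: "span (G ` {..<Suc k}) = span (u ` {..<Suc k})"
  proof
    have "G ` {..<Suc k} \<subseteq> span (u ` {..<Suc k})"
    proof
      fix y assume "y \<in> G ` {..<Suc k}"
      then obtain i where i: "i < Suc k" "y = G i" by auto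
      show "y \<in> span (u ` {..<Suc k})"
      proof (cases "i < k")
        case True
        then have "y \<in> span (u ` {..<k})" using sp i unfolding G_def by (auto intro: span_base)
        then show ?thesis using span_Suc by blast
      next
        case False
        then have "i = k" using i by simp
        have "S \<in> span (u ` {..<k})" using Ssp sp unfolding G_def by simp
        then have "S \<in> span (u ` {..<Suc k})" using span_Suc by blast
        moreover have "u k \<in> span (u ` {..<Suc k})" by (intro span_base) auto
        ultimately have "v \<in> span (u ` {..<Suc k})" unfolding v_eq by (intro span_diff)
        then show ?thesis unfolding i(2) \<open>i = k\<close> Gk by (intro span_scale)
      qed
    qed
    then show "span (G ` {..<Suc k}) \<subseteq> span (u ` {..<Suc k})" by (intro span_minimal) auto
    have "u ` {..<Suc k} \<subseteq> span (G ` {..<Suc k})"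
    proof
      fix y assume "y \<in> u ` {..<Suc k}"
      then obtain i where i: "i < Suc k" "y = u i" by auto
      show "y \<in> span (G ` {..<Suc k})"
      proof (cases "i < k")
        case True
        then have "y \<in> span (G ` {..<k})" using sp i unfolding G_def by (auto intro: span_base)
        then show ?thesis using span_Suc by blast
      next
        case False
        then have "i = k" using i by simp
        have "S \<in> span (G ` {..<Suc k})" using Ssp using span_Suc by blast
        moreover have "v \<in> span (G ` {..<Suc k})"
        proof -
          have "v = sqrt q *\<^sub>R G k" unfolding Gk using qpos by simp
          moreover have "G k \<in> span (G ` {..<Suc k})" by (intro span_base) auto
          ultimately show ?thesis by (simp add: span_scale)
        qed
        ultimately have "v + S \<in> span (G ` {..<Suc k})" by (intro span_add)
        then show ?thesis unfolding i(2) \<open>i = k\<close> using v_eq by simp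
      qed
    qed
    then show "span (u ` {..<Suc k}) \<subseteq> span (G ` {..<Suc k})" by (intro span_minimal) auto
  qed
  show ?case using A1 B1 unfolding G_def by simp
qed

lemma gsv_pos:
  fixes A :: "real^'n^'n" and u :: "nat \<Rightarrow> real^'n"
  assumes symA: "transpose A = A" and pd: "\<And>v. v \<noteq> 0 \<Longrightarrow> v \<bullet> (A *v v) > 0"
    and ind: "\<And>k. k < m \<Longrightarrow> u k \<notin> span (u ` {..<k})" and km: "k < m"
  shows "(A *v gsv A u k) \<bullet> gsv A u k > 0"
proof -
  have sp: "span (gs A u ` {..<k}) = span (u ` {..<k})"
    using GS_main[OF symA pd ind, of k] km by simp
  define S where "S = (\<Sum>j<k. ((A *v gs A u j) \<bullet> u k) *\<^sub>R gs A u j)"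
  have v_eq: "gsv A u k = u k - S" unfolding gsv_def S_def by simp
  have Ssp: "S \<in> span (gs A u ` {..<k})" unfolding S_def
    by (intro span_sum span_scale span_base) auto
  have vnz: "gsv A u k \<noteq> 0"
  proof
    assume "gsv A u k = 0"
    then have "u k = S" using v_eq by simp
    with Ssp sp have "u k \<in> span (u ` {..<k})" by simp
    with ind[OF km] show False by simp
  qed
  show ?thesis using pd[OF vnz] by (simp add: inner_commute)
qed

lemma gs_id:
  fixes A :: "real^'n^'n" and u :: "nat \<Rightarrow> real^'n"
  assumes on: "\<And>i j. i < m \<Longrightarrow> j < m \<Longrightarrow> (A *v u i) \<bullet> u j = (if i = j then 1 else 0)"
  shows "k < m \<Longrightarrow> gs A u k = u k"
proof (induction k rule: less_induct)
  case (less k)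
  have "(\<Sum>j<k. ((A *v gs A u j) \<bullet> u k) *\<^sub>R gs A u j) = (\<Sum>j<k. ((A *v u j) \<bullet> u k) *\<^sub>R u j)"
    by (rule sum.cong) (use less in auto)
  also have "\<dots> = 0" by (rule sum.neutral) (use less on in auto)
  finally have v: "gsv A u k = u k" unfolding gsv_def by simp
  have "(A *v u k) \<bullet> u k = 1" using on less by simp
  then show ?case unfolding gs_eq v by simp
qed

lemma QF: "(transpose U ** A ** U) $ a $ b = column a U \<bullet> (A *v column b (U::real^'m^'n))"
  apply (simp add: matrix_matrix_mult_def matrix_vector_mult_def inner_vec_def column_def transpose_def
      sum_distrib_left sum_distrib_right mult.assoc)
  apply (subst sum.swap)
  apply (simp add: mult.assoc mult.left_commute)
  done

lemma C2_gs:
  fixes M :: "real^'l \<Rightarrow> real^'n^'n" and u :: "nat \<Rightarrow> real^'n"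
  assumes MC: "C2_on UNIV M" and symA: "\<And>x. transpose (M x) = M x"
    and pd: "\<And>x v. v \<noteq> 0 \<Longrightarrow> v \<bullet> (M x *v v) > 0"
    and ind: "\<And>k. k < m \<Longrightarrow> u k \<notin> span (u ` {..<k})"
  shows "k < m \<Longrightarrow> C2_on UNIV (\<lambda>x. gs (M x) u k)"
proof (induction k rule: less_induct)
  case (less k)
  have v: "C2_on UNIV (\<lambda>x. gsv (M x) u k)"
    unfolding gsv_def
    by (intro C2_diff C2_const C2_sum C2_scaleR C2_inner C2_mvmul MC finite) (use less in auto)
  have q: "C2_on UNIV (\<lambda>x. (M x *v gsv (M x) u k) \<bullet> gsv (M x) u k)"
    by (intro C2_inner C2_mvmul MC v)
  have qpos: "(M x *v gsv (M x) u k) \<bullet> gsv (M x) u k > 0" for x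
    by (rule gsv_pos[OF symA pd ind less.prems])
  have "C2_on UNIV (\<lambda>x. inverse (sqrt ((M x *v gsv (M x) u k) \<bullet> gsv (M x) u k)) *\<^sub>R gsv (M x) u k)"
  proof (intro C2_scaleR C2_inverse C2_sqrt q v)
    fix x
    show "0 < (M x *v gsv (M x) u k) \<bullet> gsv (M x) u k" by (rule qpos)
    then show "sqrt ((M x *v gsv (M x) u k) \<bullet> gsv (M x) u k) \<noteq> 0" by simp
  qed
  moreover have "(\<lambda>x. gs (M x) u k) = (\<lambda>x. inverse (sqrt ((M x *v gsv (M x) u k) \<bullet> gsv (M x) u k)) *\<^sub>R gsv (M x) u k)"
    by (rule ext) (simp add: gs_eq[of "M _"] divide_inverse)
  ultimately show ?case by simp
qed

theorem lemma1:
  fixes K M :: "real^'l \<Rightarrow> real^'n^'n"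
    and x0 :: "real^'l"
    and Um :: "real^'m^'n"
  assumes "\<And>x. sym_posdef (K x)"
    and "\<And>x. sym_posdef (M x)"
    and "C2_on UNIV K"
    and "C2_on UNIV M"
    and "transpose Um ** M x0 ** Um = mat 1"
  shows "\<exists>N (U0 :: real^'l \<Rightarrow> real^'m^'n).
           open N \<and> x0 \<in> N \<and>
           (\<forall>x\<in>N. transpose (U0 x) ** M x ** U0 x = mat 1 \<and>
                    span (columns (U0 x)) = span (columns Um)) \<and>
           C2_on N (\<lambda>x. transpose (U0 x) ** M x ** matrix_inv (K x) ** M x ** U0 x) \<and>
           transpose (U0 x0) ** M x0 ** matrix_inv (K x0) ** M x0 ** U0 x0
             = transpose Um ** M x0 ** matrix_inv (K x0) ** M x0 ** Um"
proof -
  note Kpd = assms(1) and Mpd = assms(2) and KC = assms(3) and MC = assms(4) and orth0 = assms(5)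
  define m where "m = CARD('m)"
  obtain e :: "nat \<Rightarrow> 'm" where e: "bij_betw e {..<m} UNIV"
    using ex_bij_betw_nat_finite[of "UNIV :: 'm set"] unfolding m_def atLeast0LessThan by auto
  define \<iota> where "\<iota> = inv_into {..<m} e"
  have \<iota>: "bij_betw \<iota> UNIV {..<m}" unfolding \<iota>_def by (rule bij_betw_inv_into[OF e])
  have e\<iota>: "e (\<iota> j) = j" for j unfolding \<iota>_def by (meson bij_betw_inv_into_right e UNIV_I)
  have \<iota>e: "\<iota> (e k) = k" if "k < m" for k unfolding \<iota>_def using e that by (simp add: bij_betw_inv_into_left)
  have \<iota>m: "\<iota> j < m" for j using \<iota> by (auto simp: bij_betw_def)
  have einj: "e i = e j \<longleftrightarrow> i = j" if "i < m" "j < m" for i j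
    using e that by (auto simp: bij_betw_def inj_on_def)
  define u where "u k = column (e k) Um" for k
  have symM: "transpose (M x) = M x" for x using Mpd unfolding sym_posdef_def by blast
  have pdM: "v \<noteq> 0 \<Longrightarrow> v \<bullet> (M x *v v) > 0" for x v using Mpd unfolding sym_posdef_def by blast
  have on0: "(M x0 *v u i) \<bullet> u j = (if i = j then 1 else 0)" if "i < m" "j < m" for i j
  proof -
    have "(M x0 *v u i) \<bullet> u j = u j \<bullet> (M x0 *v u i)" by (rule inner_commute)
    also have "\<dots> = (transpose Um ** M x0 ** Um) $ e j $ e i" unfolding u_def QF ..
    also have "\<dots> = (if i = j then 1 else 0)" unfolding orth0 using einj[OF that] by (auto simp: mat_def)
    finally show ?thesis .
  qed
  have ind: "u k \<notin> span (u ` {..<k})" if k: "k < m" for k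
  proof
    assume a: "u k \<in> span (u ` {..<k})"
    have "span (u ` {..<k}) \<subseteq> {w. (M x0 *v u k) \<bullet> w = 0}"
    proof (rule span_minimal)
      show "u ` {..<k} \<subseteq> {w. (M x0 *v u k) \<bullet> w = 0}" using on0 k by auto
      show "subspace {w. (M x0 *v u k) \<bullet> w = 0}"
        unfolding subspace_def by (simp add: inner_add_right)
    qed
    with a have "(M x0 *v u k) \<bullet> u k = 0" by auto
    with on0[OF k k] show False by simp
  qed
  define U0 :: "real^'l \<Rightarrow> real^'m^'n" where "U0 x = (\<chi> i j. gs (M x) u (\<iota> j) $ i)" for x
  have colU0: "column j (U0 x) = gs (M x) u (\<iota> j)" for x j
    unfolding U0_def by (simp add: column_def vec_eq_iff)
  have colUm: "column j Um = u (\<iota> j)" for j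
    unfolding u_def e\<iota> ..
  have GSm: "(\<forall>i<m. \<forall>j<m. (M x *v gs (M x) u i) \<bullet> gs (M x) u j = (if i = j then 1 else 0))
     \<and> span (gs (M x) u ` {..<m}) = span (u ` {..<m})" for x
    by (rule GS_main[OF symM pdM ind]) auto
  have P1: "transpose (U0 x) ** M x ** U0 x = mat 1" for x
  proof -
    have "(transpose (U0 x) ** M x ** U0 x) $ a $ b = mat 1 $ a $ b" for a b
    proof -
      have "(transpose (U0 x) ** M x ** U0 x) $ a $ b = gs (M x) u (\<iota> a) \<bullet> (M x *v gs (M x) u (\<iota> b))"
        unfolding QF colU0 ..
      also have "\<dots> = (M x *v gs (M x) u (\<iota> b)) \<bullet> gs (M x) u (\<iota> a)" by (rule inner_commute)
      also have "\<dots> = (if \<iota> b = \<iota> a then 1 else 0)" using GSm[of x] \<iota>m by auto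
      also have "\<dots> = mat 1 $ a $ b" using e\<iota> by (auto simp: mat_def) (metis e\<iota>)
      finally show ?thesis .
    qed
    then show ?thesis by (simp add: vec_eq_iff)
  qed
  have rng: "range \<iota> = {..<m}" using \<iota> by (simp add: bij_betw_def)
  have P2: "span (columns (U0 x)) = span (columns Um)" for x
  proof -
    have "columns (U0 x) = gs (M x) u ` {..<m}"
      unfolding columns_def colU0 rng[symmetric] by auto
    moreover have "columns Um = u ` {..<m}"
      unfolding columns_def colUm rng[symmetric] by auto
    ultimately show ?thesis using GSm[of x] by simp
  qed
  have gsC2: "C2_on UNIV (\<lambda>x. gs (M x) u k)" if "k < m" for k
    by (rule C2_gs[OF MC symM pdM ind that])
  have U0C2: "C2_on UNIV U0"
  proof -
    have "C2_on UNIV (\<lambda>x. (\<chi> i j. gs (M x) u (\<iota> j) $ i) :: real^'m^'n)"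
      by (intro C2_vec C2_nth gsC2 \<iota>m)
    then show ?thesis unfolding U0_def[abs_def] .
  qed
  have detK: "det (K x) \<noteq> 0" for x by (rule pd_det[OF Kpd])
  have P3: "C2_on UNIV (\<lambda>x. transpose (U0 x) ** M x ** matrix_inv (K x) ** M x ** U0 x)"
    by (intro C2_mmul C2_transpose U0C2 MC C2_matrix_inv KC detK)
  have U0x0: "U0 x0 = Um"
  proof -
    have "gs (M x0) u k = u k" if "k < m" for k
      by (rule gs_id[OF on0 that]) auto
    then show ?thesis unfolding U0_def using \<iota>m by (simp add: vec_eq_iff u_def column_def e\<iota>)
  qed
  show ?thesis
    by (rule exI[of _ UNIV], rule exI[of _ U0]) (simp add: P1 P2 P3 U0x0)
qed

end
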